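(* Let $(C,\chi)$ be a Hopf heap. If a Grunspan map $\vartheta$ for $C$ exists, then necessarily $\vartheta(c)=\sum[c_{(1)},[c_{(4)},c_{(3)},c_{(2)}],c_{(5)}]$ for all $c\in C$; in particular it is unique. Moreover, if $f:C\to D$ is a morphism of Hopf heaps and $C,D$ have Grunspan maps $\vartheta_C,\vartheta_D$, then $f\circ\vartheta_C=\vartheta_D\circ f$.
   Context: Work over a field $\mathbb{F}$; coalgebras are coassociative, counital, nonzero, with Sweedler notation. $C^{\mathrm{co}}$ is the co-opposite coalgebra. A Hopf heap is a coalgebra $C$ with a coalgebra map $\chi:C\otimes C^{\mathrm{co}}\otimes C\to C$, $a\otimes b\otimes c\mapsto[a,b,c]$, such that $[[a,b,c],d,e]=[a,b,[c,d,e]]$ and $\sum[c_{(1)},c_{(2)},a]=\sum[a,c_{(1)},c_{(2)}]=\varepsilon(c)a$ for all $a,b,c,d,e$. A morphism of Hopf heaps $f:C\to D$ is a coalgebra map with $f([a,b,c])=[f(a),f(b),f(c)]$. A Grunspan map is a coalgebra map $\vartheta:C\to C$ with $[[a,b,\vartheta(c)],d,e]=[a,[d,c,b],e]$ for all $a,b,c,d,e\in C$. *)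

theory Defs
  imports "HOL-Library.Poly_Mapping"
begin

text \<open>
  Vector spaces over a field k are modelled by their basis: the space with basis
  indexed by a type 'b is the space of finitely supported functions 'b to k.
  Tensor products of based spaces are based on products of the index types.
  Linear maps are given by their values on basis vectors and extended linearly.
\<close>

definition vsmul :: "'k::field \<Rightarrow> ('a \<Rightarrow>\<^sub>0 'k) \<Rightarrow> ('a \<Rightarrow>\<^sub>0 'k)" where
  "vsmul c v = Poly_Mapping.map (\<lambda>a. c * a) v"

definition bv :: "'a \<Rightarrow> ('a \<Rightarrow>\<^sub>0 'k::field)" where
  "bv x = Poly_Mapping.single x 1"

definition lext :: "('a \<Rightarrow> ('b \<Rightarrow>\<^sub>0 'k::field)) \<Rightarrow> ('a \<Rightarrow>\<^sub>0 'k) \<Rightarrow> ('b \<Rightarrow>\<^sub>0 'k)" where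
  "lext f v = (\<Sum>i\<in>Poly_Mapping.keys v. vsmul (Poly_Mapping.lookup v i) (f i))"

definition lfun :: "('a \<Rightarrow> 'k::field) \<Rightarrow> ('a \<Rightarrow>\<^sub>0 'k) \<Rightarrow> 'k" where
  "lfun g v = (\<Sum>i\<in>Poly_Mapping.keys v. Poly_Mapping.lookup v i * g i)"

definition tens :: "('a \<Rightarrow>\<^sub>0 'k::field) \<Rightarrow> ('b \<Rightarrow>\<^sub>0 'k) \<Rightarrow> ('a \<times> 'b \<Rightarrow>\<^sub>0 'k)" where
  "tens u w = lext (\<lambda>x. lext (\<lambda>y. bv (x, y)) w) u"

definition coalgebra :: "('b \<Rightarrow> ('b \<times> 'b \<Rightarrow>\<^sub>0 'k::field)) \<Rightarrow> ('b \<Rightarrow> 'k) \<Rightarrow> bool" where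
  "coalgebra D e \<longleftrightarrow>
     (\<forall>x. lext (\<lambda>(y,z). lext (\<lambda>(u,w). bv (u,w,z)) (D y)) (D x)
          = lext (\<lambda>(y,z). lext (\<lambda>(u,w). bv (y,u,w)) (D z)) (D x)) \<and>
     (\<forall>x. lext (\<lambda>(y,z). vsmul (e y) (bv z)) (D x) = bv x) \<and>
     (\<forall>x. lext (\<lambda>(y,z). vsmul (e z) (bv y)) (D x) = bv x)"

definition coopp :: "('b \<Rightarrow> ('b \<times> 'b \<Rightarrow>\<^sub>0 'k::field)) \<Rightarrow> 'b \<Rightarrow> ('b \<times> 'b \<Rightarrow>\<^sub>0 'k)" where
  "coopp D x = lext (\<lambda>(y,z). bv (z,y)) (D x)"

definition tcomult :: "('a \<Rightarrow> ('a \<times> 'a \<Rightarrow>\<^sub>0 'k::field)) \<Rightarrow> ('b \<Rightarrow> ('b \<times> 'b \<Rightarrow>\<^sub>0 'k))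
    \<Rightarrow> 'a \<times> 'b \<Rightarrow> (('a \<times> 'b) \<times> ('a \<times> 'b) \<Rightarrow>\<^sub>0 'k)" where
  "tcomult D1 D2 p = (case p of (x,y) \<Rightarrow>
     lext (\<lambda>(x1,x2). lext (\<lambda>(y1,y2). bv ((x1,y1),(x2,y2))) (D2 y)) (D1 x))"

definition tcounit :: "('a \<Rightarrow> 'k::field) \<Rightarrow> ('b \<Rightarrow> 'k) \<Rightarrow> 'a \<times> 'b \<Rightarrow> 'k" where
  "tcounit e1 e2 p = (case p of (x,y) \<Rightarrow> e1 x * e2 y)"

definition coalg_map :: "('a \<Rightarrow> ('a \<times> 'a \<Rightarrow>\<^sub>0 'k::field)) \<Rightarrow> ('a \<Rightarrow> 'k)
    \<Rightarrow> ('b \<Rightarrow> ('b \<times> 'b \<Rightarrow>\<^sub>0 'k)) \<Rightarrow> ('b \<Rightarrow> 'k) \<Rightarrow> ('a \<Rightarrow> ('b \<Rightarrow>\<^sub>0 'k)) \<Rightarrow> bool" where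
  "coalg_map D1 e1 D2 e2 f \<longleftrightarrow>
     (\<forall>x. lext D2 (f x) = lext (\<lambda>(y,z). tens (f y) (f z)) (D1 x)) \<and>
     (\<forall>x. lfun e2 (f x) = e1 x)"

definition brk :: "('b \<Rightarrow> 'b \<Rightarrow> 'b \<Rightarrow> ('b \<Rightarrow>\<^sub>0 'k::field))
    \<Rightarrow> ('b \<Rightarrow>\<^sub>0 'k) \<Rightarrow> ('b \<Rightarrow>\<^sub>0 'k) \<Rightarrow> ('b \<Rightarrow>\<^sub>0 'k) \<Rightarrow> ('b \<Rightarrow>\<^sub>0 'k)" where
  "brk br u v w = lext (\<lambda>x. lext (\<lambda>y. lext (\<lambda>z. br x y z) w) v) u"

text \<open>iterated comultiplication into (n+1)-fold tensors, indexed by lists: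
  c \<mapsto> c_(1) \<otimes> ... \<otimes> c_(n+1)\<close>
fun itcomult :: "('b \<Rightarrow> ('b \<times> 'b \<Rightarrow>\<^sub>0 'k::field)) \<Rightarrow> nat \<Rightarrow> 'b \<Rightarrow> ('b list \<Rightarrow>\<^sub>0 'k)" where
  "itcomult D 0 x = bv [x]"
| "itcomult D (Suc n) x = lext (\<lambda>(y,z). lext (\<lambda>zs. bv (y # zs)) (itcomult D n z)) (D x)"

text \<open>Sweedler sum  \<Sum> F(c_(1),...,c_(n+1))  for a multilinear F given on basis vectors\<close>
definition sweedler :: "('b \<Rightarrow> ('b \<times> 'b \<Rightarrow>\<^sub>0 'k::field)) \<Rightarrow> nat
    \<Rightarrow> ('b list \<Rightarrow> ('c \<Rightarrow>\<^sub>0 'k)) \<Rightarrow> ('b \<Rightarrow>\<^sub>0 'k) \<Rightarrow> ('c \<Rightarrow>\<^sub>0 'k)" where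
  "sweedler D n F c = lext F (lext (itcomult D n) c)"

definition hopf_heap :: "('b \<Rightarrow> ('b \<times> 'b \<Rightarrow>\<^sub>0 'k::field)) \<Rightarrow> ('b \<Rightarrow> 'k)
    \<Rightarrow> ('b \<Rightarrow> 'b \<Rightarrow> 'b \<Rightarrow> ('b \<Rightarrow>\<^sub>0 'k)) \<Rightarrow> bool" where
  "hopf_heap D e br \<longleftrightarrow>
     coalgebra D e \<and>
     coalg_map (tcomult D (tcomult (coopp D) D)) (tcounit e (tcounit e e)) D e
               (\<lambda>(a,b,c). br a b c) \<and>
     (\<forall>a b c d f. brk br (brk br a b c) d f = brk br a b (brk br c d f)) \<and>
     (\<forall>a c. sweedler D 1 (\<lambda>l. brk br (bv (l!0)) (bv (l!1)) a) c = vsmul (lfun e c) a) \<and>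
     (\<forall>a c. sweedler D 1 (\<lambda>l. brk br a (bv (l!0)) (bv (l!1))) c = vsmul (lfun e c) a)"

definition hh_morphism :: "('a \<Rightarrow> ('a \<times> 'a \<Rightarrow>\<^sub>0 'k::field)) \<Rightarrow> ('a \<Rightarrow> 'k)
    \<Rightarrow> ('a \<Rightarrow> 'a \<Rightarrow> 'a \<Rightarrow> ('a \<Rightarrow>\<^sub>0 'k))
    \<Rightarrow> ('b \<Rightarrow> ('b \<times> 'b \<Rightarrow>\<^sub>0 'k)) \<Rightarrow> ('b \<Rightarrow> 'k) \<Rightarrow> ('b \<Rightarrow> 'b \<Rightarrow> 'b \<Rightarrow> ('b \<Rightarrow>\<^sub>0 'k))
    \<Rightarrow> ('a \<Rightarrow> ('b \<Rightarrow>\<^sub>0 'k)) \<Rightarrow> bool" where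
  "hh_morphism D1 e1 br1 D2 e2 br2 f \<longleftrightarrow>
     coalg_map D1 e1 D2 e2 f \<and>
     (\<forall>a b c. lext f (brk br1 a b c) = brk br2 (lext f a) (lext f b) (lext f c))"

definition grunspan :: "('b \<Rightarrow> ('b \<times> 'b \<Rightarrow>\<^sub>0 'k::field)) \<Rightarrow> ('b \<Rightarrow> 'k)
    \<Rightarrow> ('b \<Rightarrow> 'b \<Rightarrow> 'b \<Rightarrow> ('b \<Rightarrow>\<^sub>0 'k)) \<Rightarrow> ('b \<Rightarrow> ('b \<Rightarrow>\<^sub>0 'k)) \<Rightarrow> bool" where
  "grunspan D e br th \<longleftrightarrow>
     coalg_map D e D e th \<and>
     (\<forall>a b c d f. brk br (brk br a b (lext th c)) d f = brk br a (brk br d c b) f)"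

end

theory Submission
  imports Defs
begin


lemma lookup_vsmul[simp]: "Poly_Mapping.lookup (vsmul c v) i = c * Poly_Mapping.lookup v i"
  unfolding vsmul_def by (simp add: Poly_Mapping.map.rep_eq when_def)

lemma vsmul_zero_left[simp]: "vsmul 0 v = 0"
  by (rule poly_mapping_eqI) simp
lemma vsmul_zero_right[simp]: "vsmul c 0 = 0"
  by (rule poly_mapping_eqI) simp
lemma vsmul_one[simp]: "vsmul 1 v = v"
  by (rule poly_mapping_eqI) simp
lemma vsmul_add_right: "vsmul c (u + v) = vsmul c u + vsmul c v"
  by (rule poly_mapping_eqI) (simp add: lookup_add algebra_simps)
lemma vsmul_add_left: "vsmul (c + d) v = vsmul c v + vsmul d v"
  by (rule poly_mapping_eqI) (simp add: lookup_add algebra_simps)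
lemma vsmul_vsmul[simp]: "vsmul c (vsmul d v) = vsmul (c * d) v"
  by (rule poly_mapping_eqI) (simp add: algebra_simps)
lemma vsmul_sum_right: "vsmul c (\<Sum>i\<in>A. f i) = (\<Sum>i\<in>A. vsmul c (f i))"
  by (rule poly_mapping_eqI) (simp add: lookup_sum sum_distrib_left)
lemma vsmul_sum_left: "vsmul (\<Sum>i\<in>A. f i) v = (\<Sum>i\<in>A. vsmul (f i) v)"
  by (rule poly_mapping_eqI) (simp add: lookup_sum sum_distrib_right)
lemma keys_vsmul: "Poly_Mapping.keys (vsmul c v) \<subseteq> Poly_Mapping.keys v"
  by (auto simp: in_keys_iff)

lemma lext_superset:
  assumes "finite S" "Poly_Mapping.keys v \<subseteq> S"
  shows "lext f v = (\<Sum>i\<in>S. vsmul (Poly_Mapping.lookup v i) (f i))"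
  unfolding lext_def
  by (rule sum.mono_neutral_left) (use assms in \<open>auto simp: in_keys_iff\<close>)

lemma lext_zero[simp]: "lext f 0 = 0"
  by (simp add: lext_def)

lemma lext_add: "lext f (u + v) = lext f u + lext f v"
proof -
  let ?S = "Poly_Mapping.keys u \<union> Poly_Mapping.keys v"
  have "lext f (u + v) = (\<Sum>i\<in>?S. vsmul (Poly_Mapping.lookup (u+v) i) (f i))"
    using keys_add[of u v] by (intro lext_superset) auto
  also have "\<dots> = (\<Sum>i\<in>?S. vsmul (Poly_Mapping.lookup u i) (f i)) + (\<Sum>i\<in>?S. vsmul (Poly_Mapping.lookup v i) (f i))"
    by (simp add: lookup_add vsmul_add_left sum.distrib)
  also have "\<dots> = lext f u + lext f v"
    by (subst (1 2) lext_superset[of ?S]) auto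
  finally show ?thesis .
qed

lemma lext_smul: "lext f (vsmul c v) = vsmul c (lext f v)"
proof -
  have "lext f (vsmul c v) = (\<Sum>i\<in>Poly_Mapping.keys v. vsmul (Poly_Mapping.lookup (vsmul c v) i) (f i))"
    by (rule lext_superset) (auto simp: keys_vsmul)
  then show ?thesis by (simp add: lext_def vsmul_sum_right)
qed

lemma lext_sum: "lext f (\<Sum>i\<in>A. g i) = (\<Sum>i\<in>A. lext f (g i))"
  by (induction A rule: infinite_finite_induct) (auto simp: lext_add)

lemma lext_comp: "lext g (lext f v) = lext (\<lambda>x. lext g (f x)) v"
  by (simp only: lext_def[of f v] lext_def[of "\<lambda>x. lext g (f x)" v] lext_sum lext_smul)

lemma lext_comp_split: "lext g (lext (\<lambda>(a,b). h a b) v) = lext (\<lambda>(a,b). lext g (h a b)) v"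
  by (simp add: lext_comp split_def)

lemma lext_bv[simp]: "lext f (bv x) = f x"
  by (simp add: lext_def bv_def)

lemma lfun_bv[simp]: "lfun g (bv x) = g x"
  by (simp add: lfun_def bv_def)

lemma lext_cong: "(\<And>x. x \<in> Poly_Mapping.keys v \<Longrightarrow> f x = g x) \<Longrightarrow> lext f v = lext g v"
  by (simp add: lext_def)

lemma lext_fsmul: "lext (\<lambda>x. vsmul c (f x)) v = vsmul c (lext f v)"
  by (simp add: lext_def vsmul_sum_right mult.commute)

lemma lext_scal: "lext (\<lambda>x. vsmul (a x) w) v = vsmul (lfun a v) w"
  by (simp add: lext_def lfun_def vsmul_sum_left)

lemma lext_bv_id[simp]: "lext bv v = v"
proof (rule poly_mapping_eqI)
  fix j
  have e: "(\<lambda>x. Poly_Mapping.lookup v x * (if x = j then 1 else 0)) = (\<lambda>x. if x = j then Poly_Mapping.lookup v j else 0)"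
    by auto
  show "Poly_Mapping.lookup (lext bv v) j = Poly_Mapping.lookup v j"
    apply (simp add: lext_def lookup_sum bv_def lookup_single when_def)
    apply (subst e)
    apply (simp add: in_keys_iff)
    done
qed

lemma lext_fubini:
  "lext (\<lambda>x. lext (\<lambda>y. B x y) v) u = lext (\<lambda>y. lext (\<lambda>x. B x y) u) v"
  unfolding lext_def
  by (simp add: vsmul_sum_right mult.commute sum.swap[of _ "Poly_Mapping.keys u"])

lemma tens_bv: "lext g (tens u w) = lext (\<lambda>x. lext (\<lambda>y. g (x,y)) w) u"
  by (simp add: tens_def lext_comp)

lemma brk_exp1: "brk br u v w = lext (\<lambda>x. brk br (bv x) v w) u"
  by (simp add: brk_def)

lemma brk_exp2: "brk br u v w = lext (\<lambda>y. brk br u (bv y) w) v"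
  unfolding brk_def lext_bv by (rule lext_fubini)

lemma brk_exp3: "brk br u v w = lext (\<lambda>z. brk br u v (bv z)) w"
proof -
  have "brk br u v w = lext (\<lambda>x. lext (\<lambda>z. lext (\<lambda>y. br x y z) v) w) u"
    unfolding brk_def by (subst lext_fubini) (rule refl)
  also have "\<dots> = lext (\<lambda>z. lext (\<lambda>x. lext (\<lambda>y. br x y z) v) u) w"
    by (rule lext_fubini)
  finally show ?thesis by (simp add: brk_def)
qed

lemma brk_lin1: "brk br (lext g u) v w = lext (\<lambda>p. brk br (g p) v w) u"
  by (simp add: brk_def lext_comp)

lemma brk_lin2: "brk br a (lext g u) w = lext (\<lambda>p. brk br a (g p) w) u"
proof -
  have "brk br a (lext g u) w = lext (\<lambda>y. brk br a (bv y) w) (lext g u)"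
    by (rule brk_exp2)
  also have "\<dots> = lext (\<lambda>p. lext (\<lambda>y. brk br a (bv y) w) (g p)) u"
    by (rule lext_comp)
  also have "\<dots> = lext (\<lambda>p. brk br a (g p) w) u"
    by (simp add: brk_exp2[symmetric])
  finally show ?thesis .
qed

lemma brk_lin3: "brk br a b (lext g u) = lext (\<lambda>p. brk br a b (g p)) u"
proof -
  have "brk br a b (lext g u) = lext (\<lambda>y. brk br a b (bv y)) (lext g u)"
    by (rule brk_exp3)
  also have "\<dots> = lext (\<lambda>p. lext (\<lambda>y. brk br a b (bv y)) (g p)) u"
    by (rule lext_comp)
  also have "\<dots> = lext (\<lambda>p. brk br a b (g p)) u"
    by (simp add: brk_exp3[symmetric])
  finally show ?thesis .
qed

lemma brk_smul3: "brk br a b (vsmul c w) = vsmul c (brk br a b w)"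
  by (subst (1 2) brk_exp3) (simp add: lext_smul)

lemma brk_smul1: "brk br (vsmul c w) a b = vsmul c (brk br w a b)"
  by (subst (1 2) brk_exp1) (simp add: lext_smul)



lemma itcomult_Suc:
  "lext F (itcomult D (Suc n) x) = lext (\<lambda>(y,z). lext (\<lambda>zs. F (y#zs)) (itcomult D n z)) (D x)"
  by (simp only: itcomult.simps lext_comp_split) (simp add: lext_comp)

lemma itcomult_0: "lext F (itcomult D 0 x) = F [x]"
  by simp

lemma sweedler_bv: "sweedler D n F (bv x) = lext F (itcomult D n x)"
  by (simp add: sweedler_def)

lemma coassoc:
  assumes co: "coalgebra D e"
  shows "lext (\<lambda>(c1,z1). lext (\<lambda>(c2,z2). F c1 c2 z2) (D z1)) (D x)
       = lext (\<lambda>(y,z2). lext (\<lambda>(c1,c2). F c1 c2 z2) (D y)) (D x)"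
proof -
  have A: "lext (\<lambda>(y,z). lext (\<lambda>(u,w). bv (u,w,z)) (D y)) (D x)
          = lext (\<lambda>(y,z). lext (\<lambda>(u,w). bv (y,u,w)) (D z)) (D x)"
    using co unfolding coalgebra_def by blast
  have "lext (\<lambda>(u,w,z). F u w z) (lext (\<lambda>(y,z). lext (\<lambda>(u,w). bv (u,w,z)) (D y)) (D x))
      = lext (\<lambda>(u,w,z). F u w z) (lext (\<lambda>(y,z). lext (\<lambda>(u,w). bv (y,u,w)) (D z)) (D x))"
    by (simp only: A)
  then show ?thesis by (simp add: lext_comp_split)
qed

lemma M:
  assumes cm: "coalg_map D e D2 e2 f"
  shows "lext (\<lambda>(u,v). \<Phi> u v) (lext D2 (f y))
       = lext (\<lambda>(a,b). lext (\<lambda>u. lext (\<lambda>v. \<Phi> u v) (f b)) (f a)) (D y)"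
proof -
  have "lext D2 (f y) = lext (\<lambda>(a,b). tens (f a) (f b)) (D y)"
    using cm unfolding coalg_map_def by blast
  then show ?thesis by (simp add: lext_comp_split tens_bv)
qed

lemma heap_basis1:
  assumes hh: "hopf_heap D2 e2 br2"
  shows "lext (\<lambda>(u,v). brk br2 (bv u) (bv v) w) (D2 u0) = vsmul (e2 u0) w"
proof -
  have "sweedler D2 1 (\<lambda>l. brk br2 (bv (l!0)) (bv (l!1)) w) (bv u0) = vsmul (lfun e2 (bv u0)) w"
    using hh unfolding hopf_heap_def by blast
  then show ?thesis by (simp add: sweedler_bv itcomult_Suc itcomult_0 del: itcomult.simps)
qed

lemma heap_basis2:
  assumes hh: "hopf_heap D2 e2 br2"
  shows "lext (\<lambda>(u,v). brk br2 w (bv u) (bv v)) (D2 u0) = vsmul (e2 u0) w"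
proof -
  have "sweedler D2 1 (\<lambda>l. brk br2 w (bv (l!0)) (bv (l!1))) (bv u0) = vsmul (lfun e2 (bv u0)) w"
    using hh unfolding hopf_heap_def by blast
  then show ?thesis by (simp add: sweedler_bv itcomult_Suc itcomult_0 del: itcomult.simps)
qed

lemma heapL:
  assumes hh: "hopf_heap D2 e2 br2" and cm: "coalg_map D e D2 e2 f"
  shows "lext (\<lambda>(c1,c2). brk br2 (f c1) (f c2) w) (D y) = vsmul (e y) w"
proof -
  have x: "brk br2 (f a) (f b) w = lext (\<lambda>u. lext (\<lambda>v. brk br2 (bv u) (bv v) w) (f b)) (f a)" for a b
  proof -
    have "brk br2 (f a) (f b) w = brk br2 (lext bv (f a)) (lext bv (f b)) w" by simp
    also have "\<dots> = lext (\<lambda>u. lext (\<lambda>v. brk br2 (bv u) (bv v) w) (f b)) (f a)"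
      by (simp only: brk_lin1 brk_lin2) (rule lext_fubini)
    finally show ?thesis .
  qed
  have "lext (\<lambda>(c1,c2). brk br2 (f c1) (f c2) w) (D y)
      = lext (\<lambda>(a,b). lext (\<lambda>u. lext (\<lambda>v. brk br2 (bv u) (bv v) w) (f b)) (f a)) (D y)"
    by (simp only: x)
  also have "\<dots> = lext (\<lambda>(u,v). brk br2 (bv u) (bv v) w) (lext D2 (f y))"
    by (rule M[OF cm, symmetric])
  also have "\<dots> = lext (\<lambda>u0. vsmul (e2 u0) w) (f y)"
    by (simp add: lext_comp heap_basis1[OF hh])
  also have "\<dots> = vsmul (e y) w"
    using cm by (simp add: lext_scal coalg_map_def)
  finally show ?thesis .
qed

lemma heapR:
  assumes hh: "hopf_heap D2 e2 br2" and cm: "coalg_map D e D2 e2 f"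
  shows "lext (\<lambda>(c1,c2). brk br2 w (f c1) (f c2)) (D y) = vsmul (e y) w"
proof -
  have x: "brk br2 w (f a) (f b) = lext (\<lambda>u. lext (\<lambda>v. brk br2 w (bv u) (bv v)) (f b)) (f a)" for a b
  proof -
    have "brk br2 w (f a) (f b) = brk br2 w (lext bv (f a)) (lext bv (f b))" by simp
    also have "\<dots> = lext (\<lambda>u. lext (\<lambda>v. brk br2 w (bv u) (bv v)) (f b)) (f a)"
      by (simp only: brk_lin2 brk_lin3) (rule lext_fubini)
    finally show ?thesis .
  qed
  have "lext (\<lambda>(c1,c2). brk br2 w (f c1) (f c2)) (D y)
      = lext (\<lambda>(a,b). lext (\<lambda>u. lext (\<lambda>v. brk br2 w (bv u) (bv v)) (f b)) (f a)) (D y)"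
    by (simp only: x)
  also have "\<dots> = lext (\<lambda>(u,v). brk br2 w (bv u) (bv v)) (lext D2 (f y))"
    by (rule M[OF cm, symmetric])
  also have "\<dots> = lext (\<lambda>u0. vsmul (e2 u0) w) (f y)"
    by (simp add: lext_comp heap_basis2[OF hh])
  also have "\<dots> = vsmul (e y) w"
    using cm by (simp add: lext_scal coalg_map_def)
  finally show ?thesis .
qed

lemma GEN:
  assumes co: "coalgebra D e" and hh: "hopf_heap D2 e2 br2" and gr: "grunspan D2 e2 br2 th2"
    and cm: "coalg_map D e D2 e2 f"
  shows "lext th2 (f x) = lext (\<lambda>(c1,z1). lext (\<lambda>(c2,z2). lext (\<lambda>(c3,z3). lext (\<lambda>(c4,c5).
            brk br2 (f c1) (brk br2 (f c4) (f c3) (f c2)) (f c5)) (D z3)) (D z2)) (D z1)) (D x)"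
proof -
  have L: "lext (\<lambda>(y,z). vsmul (e y) (bv z)) (D x) = bv x" for x
    using co unfolding coalgebra_def by blast
  have R: "lext (\<lambda>(y,z). vsmul (e z) (bv y)) (D x) = bv x" for x
    using co unfolding coalgebra_def by blast
  have G: "brk br2 (brk br2 a b (lext th2 c)) d g = brk br2 a (brk br2 d c b) g" for a b c d g
    using gr unfolding grunspan_def by blast
  have s1: "lext th2 (f x) = lext (\<lambda>(y,z). vsmul (e y) (lext th2 (f z))) (D x)"
  proof -
    have "lext th2 (f x) = lext th2 (lext f (lext (\<lambda>(y,z). vsmul (e y) (bv z)) (D x)))"
      by (simp only: L lext_bv)
    then show ?thesis by (simp add: lext_comp_split lext_smul)
  qed
  have s45: "brk br2 (f c1) (f c2) (lext th2 (f z2)) = lext (\<lambda>(c3,z3). lext (\<lambda>(c4,c5).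
            brk br2 (f c1) (brk br2 (f c4) (f c3) (f c2)) (f c5)) (D z3)) (D z2)" for c1 c2 z2
  proof -
    have "lext th2 (f z2) = lext th2 (lext f (lext (\<lambda>(y,z). vsmul (e z) (bv y)) (D z2)))"
      by (simp only: R lext_bv)
    also have "\<dots> = lext (\<lambda>(c3,z3). vsmul (e z3) (lext th2 (f c3))) (D z2)"
      by (simp add: lext_comp_split lext_smul)
    finally have "brk br2 (f c1) (f c2) (lext th2 (f z2))
        = lext (\<lambda>(c3,z3). vsmul (e z3) (brk br2 (f c1) (f c2) (lext th2 (f c3)))) (D z2)"
      by (simp add: brk_lin3 brk_smul3 split_def)
    also have "\<dots> = lext (\<lambda>(c3,z3). lext (\<lambda>(c4,c5).
            brk br2 (brk br2 (f c1) (f c2) (lext th2 (f c3))) (f c4) (f c5)) (D z3)) (D z2)"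
      by (simp only: heapR[OF hh cm])
    also have "\<dots> = lext (\<lambda>(c3,z3). lext (\<lambda>(c4,c5).
            brk br2 (f c1) (brk br2 (f c4) (f c3) (f c2)) (f c5)) (D z3)) (D z2)"
      by (simp only: G)
    finally show ?thesis .
  qed
  have "lext th2 (f x) = lext (\<lambda>(y,z). lext (\<lambda>(c1,c2). brk br2 (f c1) (f c2) (lext th2 (f z))) (D y)) (D x)"
    by (simp only: s1 heapL[OF hh cm])
  also have "\<dots> = lext (\<lambda>(c1,z1). lext (\<lambda>(c2,z2). brk br2 (f c1) (f c2) (lext th2 (f z2))) (D z1)) (D x)"
    by (rule coassoc[OF co, symmetric])
  also have "\<dots> = lext (\<lambda>(c1,z1). lext (\<lambda>(c2,z2). lext (\<lambda>(c3,z3). lext (\<lambda>(c4,c5).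
            brk br2 (f c1) (brk br2 (f c4) (f c3) (f c2)) (f c5)) (D z3)) (D z2)) (D z1)) (D x)"
    by (simp only: s45)
  finally show ?thesis .
qed



lemma cm_bv: "coalg_map D e D e bv"
proof -
  have t: "tens (bv y) (bv z) = bv (y,z)" for y z by (simp add: tens_def)
  have "lext (\<lambda>(y,z). bv (y,z)) v = v" for v :: "('b \<times> 'b) \<Rightarrow>\<^sub>0 'k::field"
    by (simp add: case_prod_eta)
  then show ?thesis unfolding coalg_map_def by (simp add: t)
qed

lemma formula:
  fixes D :: "'b \<Rightarrow> ('b \<times> 'b \<Rightarrow>\<^sub>0 'k::field)"
  assumes hh: "hopf_heap D e br" and gr: "grunspan D e br th"
  shows "lext th c = sweedler D 4
              (\<lambda>l. brk br (bv (l!0)) (brk br (bv (l!3)) (bv (l!2)) (bv (l!1))) (bv (l!4))) c"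
proof -
  have co: "coalgebra D e" using hh unfolding hopf_heap_def by blast
  have x: "th x = lext (\<lambda>l. brk br (bv (l!0)) (brk br (bv (l!3)) (bv (l!2)) (bv (l!1))) (bv (l!4))) (itcomult D 4 x)" for x
    using GEN[OF co hh gr cm_bv, of x]
    by (simp add: itcomult_Suc itcomult_0 numeral_eq_Suc del: itcomult.simps)
  show ?thesis unfolding sweedler_def lext_comp by (simp only: x[symmetric])
qed

theorem mainTheorem2:
  fixes D :: "'b \<Rightarrow> ('b \<times> 'b \<Rightarrow>\<^sub>0 'k::field)" and e :: "'b \<Rightarrow> 'k"
    and br :: "'b \<Rightarrow> 'b \<Rightarrow> 'b \<Rightarrow> ('b \<Rightarrow>\<^sub>0 'k)" and th :: "'b \<Rightarrow> ('b \<Rightarrow>\<^sub>0 'k)"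
  assumes "hopf_heap D e br" and "grunspan D e br th"
  shows "(\<forall>c. lext th c =
            sweedler D 4
              (\<lambda>l. brk br (bv (l!0)) (brk br (bv (l!3)) (bv (l!2)) (bv (l!1))) (bv (l!4))) c)
       \<and> (\<forall>th'. grunspan D e br th' \<longrightarrow> th' = th)
       \<and> (\<forall>(D2 :: 'd \<Rightarrow> ('d \<times> 'd \<Rightarrow>\<^sub>0 'k)) e2 br2 th2 f.
            hopf_heap D2 e2 br2 \<and> grunspan D2 e2 br2 th2 \<and> hh_morphism D e br D2 e2 br2 f
            \<longrightarrow> (\<forall>c. lext f (lext th c) = lext th2 (lext f c)))"
proof (intro conjI allI impI)
  fix c show "lext th c = sweedler D 4
              (\<lambda>l. brk br (bv (l!0)) (brk br (bv (l!3)) (bv (l!2)) (bv (l!1))) (bv (l!4))) c"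
    by (rule formula[OF assms])
next
  fix th' assume g': "grunspan D e br th'"
  show "th' = th"
  proof
    fix x
    have "th' x = lext th' (bv x)" by simp
    also have "\<dots> = lext th (bv x)" by (simp only: formula[OF assms(1) g'] formula[OF assms])
    finally show "th' x = th x" by simp
  qed
next
  fix D2 :: "'d \<Rightarrow> ('d \<times> 'd \<Rightarrow>\<^sub>0 'k)" and e2 br2 th2 f c
  assume H: "hopf_heap D2 e2 br2 \<and> grunspan D2 e2 br2 th2 \<and> hh_morphism D e br D2 e2 br2 f"
  have co: "coalgebra D e" using assms(1) unfolding hopf_heap_def by blast
  have cm: "coalg_map D e D2 e2 f" using H unfolding hh_morphism_def by blast
  have mor: "lext f (brk br a b d) = brk br2 (lext f a) (lext f b) (lext f d)" for a b d
    using H unfolding hh_morphism_def by blast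
  have thx: "th x = lext (\<lambda>(c1,z1). lext (\<lambda>(c2,z2). lext (\<lambda>(c3,z3). lext (\<lambda>(c4,c5).
            brk br (bv c1) (brk br (bv c4) (bv c3) (bv c2)) (bv c5)) (D z3)) (D z2)) (D z1)) (D x)" for x
    using GEN[OF co assms cm_bv, of x] by simp
  have key: "lext f (th x) = lext th2 (f x)" for x
    unfolding thx GEN[OF co conjunct1[OF H] conjunct1[OF conjunct2[OF H]] cm]
    by (simp only: lext_comp_split mor lext_bv)
  show "lext f (lext th c) = lext th2 (lext f c)"
    by (simp only: lext_comp key)
qed


end
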